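(* Fix $n\ge2$, a connected undirected graph $G$ on $n$ nodes with $m$ edges, and $\tau^*\in\mathbb R$. Run BQ-CADMM on $G$ with local data $r_i=\log\frac{dP_1}{dP_2}(y_i)$, quantizer parameters $a=\tau^*-1$, $\Delta=2$, $\delta=1$ (so the threshold is $\tau^*$), and $0<\rho<\frac{n}{4m}$. Let $\mathcal A_n=\{y^n:\text{BQ-CADMM cycles}\}\cup\{y^n:\text{BQ-CADMM converges at }\tau^*+1\}$. For $Q\in\{P_1,P_2\}$ let $F_Q(t)=Q\big(\{y^n:\frac1n\log\frac{dP_1}{dP_2}(y^n)\le t\}\big)$. Then $$1-F_Q\Big(\tau^*+4\rho\tfrac{m}{n}\Big)\le Q(\mathcal A_n)\le 1-F_Q(\tau^*-12\rho n).$$ Consequently, if $F_Q$ is continuous at $\tau^*$, then $Q(\mathcal A_n)\to Q(\mathcal A_n^* )=1-F_Q(\tau^* )$ as $\rho\to0$, where $\mathcal A_n^*=\{y^n:\frac1n\log\frac{dP_1}{dP_2}(y^n)>\tau^*\}$; in particular, if this continuity holds for both $P_1$ and $P_2$, the type-I and type-II error probabilities of $\mathcal A_n$ converge to those of $\mathcal A_n^*$ as $\rho\to0$.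
   Context: $P_1,P_2$ are mutually absolutely continuous probability measures on a Polish space (or finite set) $\Sigma$; $\log$ is the natural logarithm; $y_1,\dots,y_n$ are i.i.d., node $i$ observing $y_i$, and $\frac{dP_1}{dP_2}(y^n)=\prod_i\frac{dP_1}{dP_2}(y_i)$; probabilities of subsets of $\Sigma^n$ refer to product measures. Network and algorithm: $G$ is a connected undirected simple graph on nodes $\{1,\dots,n\}$ with $m$ edges; $\mathcal N_i$ is the set of neighbors of node $i$ ($i\notin\mathcal N_i$). Given $a\in\mathbb R$, $\Delta>0$, $\delta\in(0,\Delta)$, the $\delta$-quantizer is $\mathcal Q_\delta(x)=a$ if $x\le a+\Delta-\delta$ and $a+\Delta$ otherwise. Given local data $r_1,\dots,r_n\in\mathbb R$ and $\rho>0$, BQ-CADMM is the deterministic iteration with $x_i^0=0$, $\alpha_i^0=0$ and, for $k\ge0$, $$x_i^{k+1}=\frac{1}{1+2\rho|\mathcal N_i|}\Big(\rho|\mathcal N_i|\mathcal Q_\delta(x_i^k)+\rho\sum_{j\in\mathcal N_i}\mathcal Q_\delta(x_j^k)-\alpha_i^k+r_i\Big),\quad \alpha_i^{k+1}=\alpha_i^k+\rho\Big(|\mathcal N_i|\mathcal Q_\delta(x_i^{k+1})-\sum_{j\in\mathcal N_i}\mathcal Q_\delta(x_j^{k+1})\Big).$$ BQ-CADMM "converges at $c$" if there is $k_0$ with $\mathcal Q_\delta(x_i^k)=c$ for all $i$ and all $k\ge k_0$; it "cycles" if it converges at neither $a$ nor $a+\Delta$. *)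

theory Defs
  imports "HOL-Probability.Probability"
begin

definition quant :: "real \<Rightarrow> real \<Rightarrow> real \<Rightarrow> real \<Rightarrow> real" where
  "quant a D d x = (if x \<le> a + D - d then a else a + D)"

definition nbrs :: "(nat \<Rightarrow> nat \<Rightarrow> bool) \<Rightarrow> nat \<Rightarrow> nat \<Rightarrow> nat set" where
  "nbrs E n i = {j. j < n \<and> E i j}"

definition num_edges :: "(nat \<Rightarrow> nat \<Rightarrow> bool) \<Rightarrow> nat \<Rightarrow> nat" where
  "num_edges E n = card {(i, j). i < j \<and> j < n \<and> E i j}"

definition simple_undirected_graph :: "(nat \<Rightarrow> nat \<Rightarrow> bool) \<Rightarrow> nat \<Rightarrow> bool" where
  "simple_undirected_graph E n \<longleftrightarrow>
     (\<forall>i j. E i j \<longrightarrow> i < n \<and> j < n) \<and> (\<forall>i j. E i j \<longrightarrow> E j i) \<and> (\<forall>i. \<not> E i i)"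

definition graph_connected :: "(nat \<Rightarrow> nat \<Rightarrow> bool) \<Rightarrow> nat \<Rightarrow> bool" where
  "graph_connected E n \<longleftrightarrow> (\<forall>i<n. \<forall>j<n. E\<^sup>*\<^sup>* i j)"

fun bq :: "(nat \<Rightarrow> nat \<Rightarrow> bool) \<Rightarrow> nat \<Rightarrow> real \<Rightarrow> real \<Rightarrow> real \<Rightarrow> real \<Rightarrow> (nat \<Rightarrow> real)
           \<Rightarrow> nat \<Rightarrow> (nat \<Rightarrow> real) \<times> (nat \<Rightarrow> real)" where
  "bq E n a D d \<rho> r 0 = ((\<lambda>_. 0), (\<lambda>_. 0))"
| "bq E n a D d \<rho> r (Suc k) =
    (let (x, \<alpha>) = bq E n a D d \<rho> r k;
         q = (\<lambda>i. quant a D d (x i));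
         x' = (\<lambda>i. (\<rho> * real (card (nbrs E n i)) * q i + \<rho> * (\<Sum>j\<in>nbrs E n i. q j) - \<alpha> i + r i)
                    / (1 + 2 * \<rho> * real (card (nbrs E n i))));
         q' = (\<lambda>i. quant a D d (x' i));
         \<alpha>' = (\<lambda>i. \<alpha> i + \<rho> * (real (card (nbrs E n i)) * q' i - (\<Sum>j\<in>nbrs E n i. q' j)))
     in (x', \<alpha>'))"

definition converges_at :: "(nat \<Rightarrow> nat \<Rightarrow> bool) \<Rightarrow> nat \<Rightarrow> real \<Rightarrow> real \<Rightarrow> real \<Rightarrow> real
    \<Rightarrow> (nat \<Rightarrow> real) \<Rightarrow> real \<Rightarrow> bool" where
  "converges_at E n a D d \<rho> r c \<longleftrightarrow>
     (\<exists>k0. \<forall>k\<ge>k0. \<forall>i<n. quant a D d (fst (bq E n a D d \<rho> r k) i) = c)"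

definition cycles :: "(nat \<Rightarrow> nat \<Rightarrow> bool) \<Rightarrow> nat \<Rightarrow> real \<Rightarrow> real \<Rightarrow> real \<Rightarrow> real
    \<Rightarrow> (nat \<Rightarrow> real) \<Rightarrow> bool" where
  "cycles E n a D d \<rho> r \<longleftrightarrow> \<not> converges_at E n a D d \<rho> r a \<and> \<not> converges_at E n a D d \<rho> r (a + D)"

text \<open>dP1/dP2 (density of P1 w.r.t. P2) as a real function, and its log\<close>
definition lr :: "'a measure \<Rightarrow> 'a measure \<Rightarrow> 'a \<Rightarrow> real" where
  "lr P1 P2 s = enn2real (RN_deriv P2 P1 s)"

definition llr :: "'a measure \<Rightarrow> 'a measure \<Rightarrow> 'a \<Rightarrow> real" where
  "llr P1 P2 s = ln (lr P1 P2 s)"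

definition A_event :: "(nat \<Rightarrow> nat \<Rightarrow> bool) \<Rightarrow> nat \<Rightarrow> 'a measure \<Rightarrow> 'a measure \<Rightarrow> real \<Rightarrow> real
    \<Rightarrow> (nat \<Rightarrow> 'a) set" where
  "A_event E n P1 P2 \<tau> \<rho> =
     {y \<in> space (PiM {..<n} (\<lambda>_. P2)).
        cycles E n (\<tau> - 1) 2 1 \<rho> (\<lambda>i. llr P1 P2 (y i))
      \<or> converges_at E n (\<tau> - 1) 2 1 \<rho> (\<lambda>i. llr P1 P2 (y i)) (\<tau> + 1)}"

definition A_star :: "nat \<Rightarrow> 'a measure \<Rightarrow> 'a measure \<Rightarrow> real \<Rightarrow> (nat \<Rightarrow> 'a) set" where
  "A_star n P1 P2 \<tau> =
     {y \<in> space (PiM {..<n} (\<lambda>_. P2)). (1 / real n) * ln (\<Prod>i<n. lr P1 P2 (y i)) > \<tau>}"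

definition F_dist :: "'a measure \<Rightarrow> nat \<Rightarrow> 'a measure \<Rightarrow> 'a measure \<Rightarrow> real \<Rightarrow> real" where
  "F_dist Q n P1 P2 t = measure (PiM {..<n} (\<lambda>_. Q))
     {y \<in> space (PiM {..<n} (\<lambda>_. Q)). (1 / real n) * ln (\<Prod>i<n. lr P1 P2 (y i)) \<le> t}"

end

theory Submission
  imports Defs
begin


lemma quant_t: "quant (\<tau> - 1) 2 1 x = (if x \<le> \<tau> then \<tau> - 1 else \<tau> + 1)"
  by (simp add: quant_def)

context
  fixes E :: "nat \<Rightarrow> nat \<Rightarrow> bool" and n :: nat and \<rho> \<tau> :: real and r :: "nat \<Rightarrow> real"
begin

definition X where "X k = fst (bq E n (\<tau> - 1) 2 1 \<rho> r k)"
definition Al where "Al k = snd (bq E n (\<tau> - 1) 2 1 \<rho> r k)"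
definition qq where "qq k i = quant (\<tau> - 1) 2 1 (X k i)"
definition dg where "dg i = real (card (nbrs E n i))"
definition W where "W k i = r i - \<tau> - Al k i"

lemma X_Suc: "X (Suc k) i = (\<rho> * dg i * qq k i + \<rho> * (\<Sum>j\<in>nbrs E n i. qq k j) - Al k i + r i)
                    / (1 + 2 * \<rho> * dg i)"
  unfolding X_def Al_def qq_def dg_def
  by (cases "bq E n (\<tau> - 1) 2 1 \<rho> r k") (simp add: Let_def)

lemma Al_Suc: "Al (Suc k) i = Al k i + \<rho> * (dg i * qq (Suc k) i - (\<Sum>j\<in>nbrs E n i. qq (Suc k) j))"
  unfolding X_def Al_def qq_def dg_def
  by (cases "bq E n (\<tau> - 1) 2 1 \<rho> r k") (simp add: Let_def)

lemma finite_nbrs: "finite (nbrs E n i)"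
  unfolding nbrs_def by auto

lemma dg_sum: "dg i * c - (\<Sum>j\<in>nbrs E n i. f j) = (\<Sum>j\<in>nbrs E n i. c - f j)"
  by (simp add: dg_def sum_subtractf)

lemma qq_cases: "qq k i = (if X k i \<le> \<tau> then \<tau> - 1 else \<tau> + 1)"
  by (simp add: qq_def quant_t)

lemma W_Suc: "W (Suc k) i = W k i - \<rho> * (\<Sum>j\<in>nbrs E n i. qq (Suc k) i - qq (Suc k) j)"
  unfolding W_def Al_Suc dg_sum[symmetric] by simp

lemma sum_pm: 
  assumes "\<And>j. j \<in> A \<Longrightarrow> \<bar>f j\<bar> \<le> c" "finite A"
  shows "\<bar>\<Sum>j\<in>A. f j\<bar> \<le> real (card A) * c"
proof -
  have "\<bar>\<Sum>j\<in>A. f j\<bar> \<le> (\<Sum>j\<in>A. \<bar>f j\<bar>)" by (rule sum_abs)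
  also have "\<dots> \<le> real (card A) * c" using sum_bounded_above[of A "\<lambda>j. \<bar>f j\<bar>" c] assms by auto
  finally show ?thesis .
qed

lemma key_cond:
  assumes rho: "\<rho> > 0"
  shows "\<bar>(X (Suc k) i - \<tau>) * (1 + 2 * \<rho> * dg i) - W k i\<bar> \<le> 2 * \<rho> * dg i"
proof -
  have dpos: "1 + 2 * \<rho> * dg i > 0" using rho by (simp add: dg_def add_pos_nonneg)
  have "(X (Suc k) i - \<tau>) * (1 + 2 * \<rho> * dg i) - W k i
      = \<rho> * (dg i * (qq k i - \<tau>) + (\<Sum>j\<in>nbrs E n i. qq k j - \<tau>))"
    using dpos unfolding X_Suc W_def
    by (simp add: field_simps sum_subtractf dg_def)
  also have "\<bar>\<dots>\<bar> \<le> \<rho> * (dg i * 1 + dg i * 1)"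
  proof -
    have 1: "\<bar>qq k i - \<tau>\<bar> \<le> 1" by (simp add: qq_cases)
    have 2: "\<bar>\<Sum>j\<in>nbrs E n i. qq k j - \<tau>\<bar> \<le> dg i * 1"
      unfolding dg_def by (rule sum_pm) (auto simp: qq_cases finite_nbrs)
    have "\<bar>dg i * (qq k i - \<tau>)\<bar> \<le> dg i * 1"
      using 1 by (simp add: abs_mult dg_def) (metis mult.right_neutral mult_left_mono of_nat_0_le_iff)
    then have "\<bar>dg i * (qq k i - \<tau>) + (\<Sum>j\<in>nbrs E n i. qq k j - \<tau>)\<bar> \<le> dg i * 1 + dg i * 1"
      using 2 abs_triangle_ineq[of "dg i * (qq k i - \<tau>)" "\<Sum>j\<in>nbrs E n i. qq k j - \<tau>"] by linarith
    then show ?thesis using rho by (simp add: abs_mult mult_left_mono)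
  qed
  finally show ?thesis by simp
qed

lemma high_W:
  assumes rho: "\<rho> > 0" and h: "X (Suc k) i > \<tau>"
  shows "W k i > - 2 * \<rho> * dg i"
proof -
  have dpos: "1 + 2 * \<rho> * dg i > 0" using rho by (simp add: dg_def add_pos_nonneg)
  have "(X (Suc k) i - \<tau>) * (1 + 2 * \<rho> * dg i) > 0" using h dpos by simp
  then show ?thesis using key_cond[OF rho, of k i] by linarith
qed

lemma low_W:
  assumes rho: "\<rho> > 0" and h: "X (Suc k) i \<le> \<tau>"
  shows "W k i \<le> 2 * \<rho> * dg i"
proof -
  have dpos: "1 + 2 * \<rho> * dg i > 0" using rho by (simp add: dg_def add_pos_nonneg)
  have "(X (Suc k) i - \<tau>) * (1 + 2 * \<rho> * dg i) \<le> 0" using h dpos by (simp add: mult_nonpos_nonneg)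
  then show ?thesis using key_cond[OF rho, of k i] by linarith
qed

lemma W_step_high:
  assumes rho: "\<rho> > 0" and h: "X (Suc k) i > \<tau>"
  shows "W (Suc k) i \<le> W k i" "W (Suc k) i \<ge> W k i - 2 * \<rho> * dg i"
proof -
  have "(\<Sum>j\<in>nbrs E n i. qq (Suc k) i - qq (Suc k) j) \<ge> 0"
    using h by (intro sum_nonneg) (auto simp: qq_cases)
  then show "W (Suc k) i \<le> W k i" unfolding W_Suc using rho by simp
  have "(\<Sum>j\<in>nbrs E n i. qq (Suc k) i - qq (Suc k) j) \<le> dg i * 2"
    unfolding dg_def using h by (intro sum_bounded_above) (auto simp: qq_cases)
  then have "\<rho> * (\<Sum>j\<in>nbrs E n i. qq (Suc k) i - qq (Suc k) j) \<le> \<rho> * (dg i * 2)"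
    using rho by (intro mult_left_mono) auto
  then show "W (Suc k) i \<ge> W k i - 2 * \<rho> * dg i" unfolding W_Suc by (simp add: algebra_simps)
qed

lemma W_step_low:
  assumes rho: "\<rho> > 0" and h: "X (Suc k) i \<le> \<tau>"
  shows "W (Suc k) i \<ge> W k i" "W (Suc k) i \<le> W k i + 2 * \<rho> * dg i"
proof -
  have "(\<Sum>j\<in>nbrs E n i. qq (Suc k) i - qq (Suc k) j) \<le> 0"
    using h by (intro sum_nonpos) (auto simp: qq_cases)
  then show "W (Suc k) i \<ge> W k i" unfolding W_Suc using rho by (simp add: mult_nonpos_nonneg mult_le_0_iff)
  have "(\<Sum>j\<in>nbrs E n i. qq (Suc k) i - qq (Suc k) j) \<ge> dg i * (-2)"
    unfolding dg_def using h by (intro sum_bounded_below) (auto simp: qq_cases)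
  then have "\<rho> * (dg i * (-2)) \<le> \<rho> * (\<Sum>j\<in>nbrs E n i. qq (Suc k) i - qq (Suc k) j)"
    using rho by (intro mult_left_mono) auto
  then show "W (Suc k) i \<le> W k i + 2 * \<rho> * dg i" unfolding W_Suc by (simp add: algebra_simps)
qed

lemma W_step_low_nb:
  assumes rho: "\<rho> > 0" and h: "X (Suc k) i \<le> \<tau>" and j: "j \<in> nbrs E n i" and hj: "X (Suc k) j > \<tau>"
  shows "W (Suc k) i \<ge> W k i + 2 * \<rho>"
proof -
  have "(\<Sum>j\<in>nbrs E n i. qq (Suc k) i - qq (Suc k) j) = (qq (Suc k) i - qq (Suc k) j) +
     (\<Sum>j\<in>nbrs E n i - {j}. qq (Suc k) i - qq (Suc k) j)"
    using j finite_nbrs by (simp add: sum.remove)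
  also have "\<dots> \<le> -2 + 0"
    using h hj by (intro add_mono sum_nonpos) (auto simp: qq_cases)
  finally have "\<rho> * (\<Sum>j\<in>nbrs E n i. qq (Suc k) i - qq (Suc k) j) \<le> \<rho> * (-2)"
    using rho by (intro mult_left_mono) auto
  then show ?thesis unfolding W_Suc by linarith
qed


lemma Al_0: "Al 0 i = 0" by (simp add: Al_def)

lemma nbrs_sum: "(\<Sum>j\<in>nbrs E n i. f j) = (\<Sum>j<n. if E i j then f j else 0)"
proof -
  have "nbrs E n i = {..<n} \<inter> {j. E i j}" by (auto simp: nbrs_def)
  then show ?thesis by (simp add: sum.If_cases)
qed

lemma sum_lap:
  fixes f :: "nat \<Rightarrow> real"
  assumes g: "simple_undirected_graph E n"
  shows "(\<Sum>i<n. \<Sum>j\<in>nbrs E n i. f i - f j) = 0"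
proof -
  have sym: "\<And>i j. E i j = E j i" using g unfolding simple_undirected_graph_def by blast
  have "(\<Sum>i<n. \<Sum>j\<in>nbrs E n i. f i - f j) = (\<Sum>i<n. \<Sum>j<n. if E i j then f i - f j else 0)"
    by (simp add: nbrs_sum)
  also have "\<dots> = (\<Sum>i<n. \<Sum>j<n. (if E i j then f i else 0) - (if E i j then f j else 0))"
    by (intro sum.cong) auto
  also have "\<dots> = (\<Sum>i<n. \<Sum>j<n. if E i j then f i else 0) - (\<Sum>i<n. \<Sum>j<n. if E i j then f j else 0)"
    by (simp add: sum_subtractf)
  also have "(\<Sum>i<n. \<Sum>j<n. if E i j then f j else 0) = (\<Sum>j<n. \<Sum>i<n. if E i j then f j else 0)"
    by (rule sum.swap)
  also have "\<dots> = (\<Sum>i<n. \<Sum>j<n. if E i j then f i else 0)"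
    using sym by simp
  finally show ?thesis by simp
qed

lemma Al_sum:
  assumes g: "simple_undirected_graph E n"
  shows "(\<Sum>i<n. Al k i) = 0"
proof (induction k)
  case 0 then show ?case by (simp add: Al_0)
next
  case (Suc k)
  have "(\<Sum>i<n. Al (Suc k) i) = (\<Sum>i<n. Al k i) + \<rho> * (\<Sum>i<n. \<Sum>j\<in>nbrs E n i. qq (Suc k) i - qq (Suc k) j)"
    unfolding Al_Suc dg_sum by (simp add: sum.distrib sum_distrib_left)
  then show ?case using Suc sum_lap[OF g, of "qq (Suc k)"] by simp
qed

lemma W_sum:
  assumes g: "simple_undirected_graph E n"
  shows "(\<Sum>i<n. W k i) = (\<Sum>i<n. r i - \<tau>)"
  using Al_sum[OF g, of k] unfolding W_def by (simp add: sum_subtractf)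

lemma W_upper:
  assumes rho: "\<rho> > 0"
  shows "W k i \<le> max (W 0 i) (4 * \<rho> * dg i)"
proof (induction k)
  case 0 then show ?case by simp
next
  case (Suc k)
  show ?case
  proof (cases "X (Suc k) i > \<tau>")
    case True then show ?thesis using W_step_high[OF rho True] Suc by linarith
  next
    case False
    then have "X (Suc k) i \<le> \<tau>" by simp
    from low_W[OF rho this] W_step_low[OF rho this] show ?thesis by linarith
  qed
qed

lemma W_lower_after_high:
  assumes rho: "\<rho> > 0" and h: "X (Suc u) i > \<tau>" and t: "t \<ge> Suc u"
  shows "W t i > - 4 * \<rho> * dg i"
  using t
proof (induction t rule: dec_induct)
  case base
  then show ?case using high_W[OF rho h] W_step_high[OF rho h] by linarith
next
  case (step t)
  show ?case
  proof (cases "X (Suc t) i > \<tau>")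
    case True then show ?thesis using high_W[OF rho True] W_step_high[OF rho True] by linarith
  next
    case False
    then have "X (Suc t) i \<le> \<tau>" by simp
    from W_step_low[OF rho this] step.IH show ?thesis by linarith
  qed
qed

lemma W_mono_low:
  assumes rho: "\<rho> > 0" and low: "\<forall>k\<ge>T. X k i \<le> \<tau>" and kk: "T \<le> k" "k \<le> k'"
  shows "W k i \<le> W k' i"
  using kk(2)
proof (induction k' rule: dec_induct)
  case base then show ?case by simp
next
  case (step t)
  have "X (Suc t) i \<le> \<tau>" using low step kk by auto
  from W_step_low[OF rho this] step.IH show ?case by linarith
qed

lemma propagate:
  assumes rho: "\<rho> > 0" and g: "simple_undirected_graph E n" and e: "E i j"
    and ev: "eventually (\<lambda>k. X k i \<le> \<tau>) sequentially"
  shows "eventually (\<lambda>k. X k j \<le> \<tau>) sequentially"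
proof (rule ccontr)
  assume ne: "\<not> ?thesis"
  have j: "j \<in> nbrs E n i" using g e unfolding simple_undirected_graph_def nbrs_def by auto
  from ev obtain T where T: "\<forall>k\<ge>T. X k i \<le> \<tau>" by (auto simp: eventually_sequentially)
  have fr: "\<forall>N. \<exists>k\<ge>N. X k j > \<tau>"
    using ne unfolding eventually_sequentially by (auto simp: not_le)
  have claim: "\<exists>k\<ge>T. W k i \<ge> W T i + 2 * \<rho> * real N" for N
  proof (induction N)
    case 0 then show ?case by auto
  next
    case (Suc N)
    then obtain k where k: "k \<ge> T" "W k i \<ge> W T i + 2 * \<rho> * real N" by auto
    obtain k' where k': "k' \<ge> Suc k" "X k' j > \<tau>" using fr by blast
    then obtain k'' where k'': "k' = Suc k''" "k'' \<ge> k" by (cases k') auto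
    have "W k i \<le> W k'' i" using W_mono_low[OF rho T k(1) k''(2)] .
    moreover have "X (Suc k'') i \<le> \<tau>" using T k k'' by auto
    moreover have "W (Suc k'') i \<ge> W k'' i + 2 * \<rho>"
      using W_step_low_nb[OF rho _ j] k' k'' T k by auto
    ultimately show ?case using k k'' by (intro exI[of _ "Suc k''"]) (auto simp: algebra_simps)
  qed
  obtain N where N: "(max (W 0 i) (4 * \<rho> * dg i) - W T i) / (2 * \<rho>) < real N"
    using reals_Archimedean2 by blast
  then have "max (W 0 i) (4 * \<rho> * dg i) - W T i < 2 * \<rho> * real N"
    using rho by (simp add: divide_less_eq mult.commute)
  moreover obtain k where "W k i \<ge> W T i + 2 * \<rho> * real N" using claim by blast
  ultimately show False using W_upper[OF rho, of k i] by linarith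
qed

lemma propagate_star:
  assumes rho: "\<rho> > 0" and g: "simple_undirected_graph E n" and e: "E\<^sup>*\<^sup>* i j"
    and ev: "eventually (\<lambda>k. X k i \<le> \<tau>) sequentially"
  shows "eventually (\<lambda>k. X k j \<le> \<tau>) sequentially"
  using e ev by (induction rule: rtranclp_induct) (auto intro: propagate[OF rho g])

lemma conv_low_bound:
  assumes rho: "\<rho> > 0" and g: "simple_undirected_graph E n"
    and low: "\<forall>i<n. X (Suc k) i \<le> \<tau>"
  shows "(\<Sum>i<n. r i - \<tau>) \<le> 2 * \<rho> * (\<Sum>i<n. dg i)"
proof -
  have "(\<Sum>i<n. W k i) \<le> (\<Sum>i<n. 2 * \<rho> * dg i)"
    using low low_W[OF rho] by (intro sum_mono) auto
  then show ?thesis by (simp add: W_sum[OF g] sum_distrib_left)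
qed

lemma conv_high_bound:
  assumes rho: "\<rho> > 0" and g: "simple_undirected_graph E n" and c: "graph_connected E n"
    and n: "n > 0"
    and s: "(\<Sum>i<n. r i - \<tau>) \<le> - 4 * \<rho> * (\<Sum>i<n. dg i)"
  shows "eventually (\<lambda>k. \<forall>i<n. X k i \<le> \<tau>) sequentially"
proof (cases "\<exists>i<n. eventually (\<lambda>k. X k i \<le> \<tau>) sequentially")
  case True
  then obtain i where i: "i < n" "eventually (\<lambda>k. X k i \<le> \<tau>) sequentially" by blast
  have "\<forall>j\<in>{..<n}. eventually (\<lambda>k. X k j \<le> \<tau>) sequentially"
    using c i propagate_star[OF rho g] unfolding graph_connected_def by auto
  from eventually_ball_finite[OF _ this] have "eventually (\<lambda>k. \<forall>y\<in>{..<n}. X k y \<le> \<tau>) sequentially"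
    by simp
  then show ?thesis by (rule eventually_mono) auto
next
  case False
  have "\<forall>i\<in>{..<n}. eventually (\<lambda>t. W t i > - 4 * \<rho> * dg i) sequentially"
  proof
    fix i assume "i \<in> {..<n}"
    with False have "\<not> eventually (\<lambda>k. X k i \<le> \<tau>) sequentially" by auto
    then obtain k where k: "k \<ge> 1" "X k i > \<tau>" by (auto simp: eventually_sequentially not_le)
    then obtain u where u: "k = Suc u" by (cases k) auto
    show "eventually (\<lambda>t. W t i > - 4 * \<rho> * dg i) sequentially"
      unfolding eventually_sequentially
      using W_lower_after_high[OF rho k(2)[unfolded u]] by blast
  qed
  from eventually_ball_finite[OF _ this] obtain t where
    t: "\<forall>i\<in>{..<n}. W t i > - 4 * \<rho> * dg i"
    by (auto simp: eventually_sequentially)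
  have "(\<Sum>i<n. - 4 * \<rho> * dg i) < (\<Sum>i<n. W t i)"
    using t n by (intro sum_strict_mono) auto
  then have False using s by (simp add: W_sum[OF g] sum_distrib_left)
  then show ?thesis ..
qed

end



lemma deg_sum:
  assumes g: "simple_undirected_graph E n"
  shows "(\<Sum>i<n. dg E n i) \<le> 2 * real (num_edges E n)"
proof -
  let ?P = "{(i, j). i < n \<and> j < n \<and> E i j}"
  let ?L = "{(i, j). i < j \<and> j < n \<and> E i j}"
  have fin: "finite ?L" by (rule finite_subset[of _ "{..<n} \<times> {..<n}"]) auto
  have "Sigma {..<n} (nbrs E n) = ?P" by (auto simp: nbrs_def)
  then have c: "(\<Sum>i<n. card (nbrs E n i)) = card ?P"
    using card_SigmaI[of "{..<n}" "nbrs E n"] by (simp add: finite_nbrs)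
  have sub: "?P \<subseteq> ?L \<union> prod.swap ` ?L"
  proof
    fix p assume "p \<in> ?P"
    then obtain i j where p: "p = (i, j)" "i < n" "j < n" "E i j" by auto
    have "i \<noteq> j" using g p unfolding simple_undirected_graph_def by auto
    then show "p \<in> ?L \<union> prod.swap ` ?L"
    proof (cases "i < j")
      case True then show ?thesis using p by auto
    next
      case False
      then have "(j, i) \<in> ?L" using p \<open>i \<noteq> j\<close> g unfolding simple_undirected_graph_def by auto
      then show ?thesis using p by (auto intro: image_eqI[of _ _ "(j, i)"])
    qed
  qed
  have "card ?P \<le> card (?L \<union> prod.swap ` ?L)" using sub fin by (intro card_mono) auto
  also have "\<dots> \<le> card ?L + card (prod.swap ` ?L)" by (rule card_Un_le)
  also have "\<dots> \<le> card ?L + card ?L" using card_image_le[OF fin, of prod.swap] by simp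
  finally have cP: "card ?P \<le> 2 * num_edges E n" unfolding num_edges_def by simp
  have "(\<Sum>i<n. dg E n i) = real (\<Sum>i<n. card (nbrs E n i))" unfolding dg_def by simp
  also have "\<dots> = real (card ?P)" using c by simp
  also have "\<dots> \<le> real (2 * num_edges E n)" using cP by (rule of_nat_mono)
  finally show ?thesis by simp
qed

lemma edges_le: "num_edges E n \<le> n * n"
proof -
  have "{(i, j). i < j \<and> j < n \<and> E i j} \<subseteq> {..<n} \<times> {..<n}" by auto
  then have "card {(i, j). i < j \<and> j < n \<and> E i j} \<le> card ({..<n} \<times> {..<n})"
    by (intro card_mono) auto
  then show ?thesis by (simp add: num_edges_def card_cartesian_product)
qed

lemma edges_pos:
  assumes g: "simple_undirected_graph E n" and c: "graph_connected E n" and n: "n \<ge> 2"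
  shows "num_edges E n > 0"
proof -
  have "E\<^sup>*\<^sup>* 0 1" using c n unfolding graph_connected_def by auto
  then have "\<exists>x. E 0 x" by (metis converse_rtranclpE zero_neq_one)
  then obtain x where x: "E 0 x" by blast
  have "x \<noteq> 0" "x < n" using g x unfolding simple_undirected_graph_def by metis+
  then have mem: "(0, x) \<in> {(i, j). i < j \<and> j < n \<and> E i j}" using x by simp
  have fin: "finite {(i, j). i < j \<and> j < n \<and> E i j}"
    by (rule finite_subset[of _ "{..<n} \<times> {..<n}"]) auto
  have "{(i, j). i < j \<and> j < n \<and> E i j} \<noteq> {}" using mem by blast
  then show ?thesis unfolding num_edges_def using fin by (simp add: card_gt_0_iff)
qed

lemma conv_iff:
  "converges_at E n (\<tau> - 1) 2 1 \<rho> r (\<tau> - 1) \<longleftrightarrow> (\<exists>k0. \<forall>k\<ge>k0. \<forall>i<n. X E n \<rho> \<tau> r k i \<le> \<tau>)"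
  unfolding converges_at_def X_def quant_t by auto

lemma A_iff:
  assumes n: "n > 0"
  shows "(cycles E n (\<tau> - 1) 2 1 \<rho> r \<or> converges_at E n (\<tau> - 1) 2 1 \<rho> r (\<tau> + 1))
     \<longleftrightarrow> \<not> (\<exists>k0. \<forall>k\<ge>k0. \<forall>i<n. X E n \<rho> \<tau> r k i \<le> \<tau>)"
proof -
  have "\<not> (converges_at E n (\<tau> - 1) 2 1 \<rho> r (\<tau> + 1) \<and> converges_at E n (\<tau> - 1) 2 1 \<rho> r (\<tau> - 1))"
  proof
    assume "converges_at E n (\<tau> - 1) 2 1 \<rho> r (\<tau> + 1) \<and> converges_at E n (\<tau> - 1) 2 1 \<rho> r (\<tau> - 1)"
    then obtain k1 k2 where h1: "\<forall>k\<ge>k1. \<forall>i<n. quant (\<tau> - 1) 2 1 (fst (bq E n (\<tau> - 1) 2 1 \<rho> r k) i) = \<tau> + 1"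
       and h2: "\<forall>k\<ge>k2. \<forall>i<n. quant (\<tau> - 1) 2 1 (fst (bq E n (\<tau> - 1) 2 1 \<rho> r k) i) = \<tau> - 1"
      unfolding converges_at_def by blast
    have "quant (\<tau> - 1) 2 1 (fst (bq E n (\<tau> - 1) 2 1 \<rho> r (max k1 k2)) 0) = \<tau> + 1"
      using h1[rule_format, of "max k1 k2" 0] n by simp
    moreover have "quant (\<tau> - 1) 2 1 (fst (bq E n (\<tau> - 1) 2 1 \<rho> r (max k1 k2)) 0) = \<tau> - 1"
      using h2[rule_format, of "max k1 k2" 0] n by simp
    ultimately have "\<tau> + 1 = \<tau> - 1" by simp
    then show False by simp
  qed
  moreover have eq: "\<tau> - 1 + 2 = \<tau> + 1" by simp
  ultimately show ?thesis unfolding cycles_def conv_iff[symmetric] eq by auto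
qed




lemma AE_lr:
  assumes p1: "prob_space P1" and p2: "prob_space P2" and s: "sets P1 = sets P2"
    and ac12: "absolutely_continuous P1 P2" and ac21: "absolutely_continuous P2 P1"
  shows "AE x in P2. lr P1 P2 x \<noteq> 0" "AE x in P1. lr P1 P2 x \<noteq> 0"
proof -
  interpret p1: prob_space P1 by fact
  interpret p2: prob_space P2 by fact
  have fin2: "AE x in P2. RN_deriv P2 P1 x \<noteq> \<infinity>"
    by (rule p2.RN_deriv_finite[OF p1.sigma_finite_measure_axioms ac21 s])
  have dens: "density P2 (RN_deriv P2 P1) = P1"
    by (rule p2.density_RN_deriv[OF ac21 s])
  have "AE x in density P2 (RN_deriv P2 P1). RN_deriv P2 P1 x \<noteq> 0"
    by (subst AE_density) auto
  then have pos1: "AE x in P1. RN_deriv P2 P1 x \<noteq> 0" unfolding dens .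
  have pos2: "AE x in P2. RN_deriv P2 P1 x \<noteq> 0"
    by (rule absolutely_continuous_AE[OF s[symmetric] ac12 pos1])
  have fin1: "AE x in P1. RN_deriv P2 P1 x \<noteq> \<infinity>"
    by (rule absolutely_continuous_AE[OF s ac21 fin2])
  show "AE x in P2. lr P1 P2 x \<noteq> 0" using fin2 pos2
    by eventually_elim (auto simp: lr_def enn2real_eq_0_iff)
  show "AE x in P1. lr P1 P2 x \<noteq> 0" using fin1 pos1
    by eventually_elim (auto simp: lr_def enn2real_eq_0_iff)
qed

lemma llr_meas:
  assumes "sets Q = sets P2"
  shows "llr P1 P2 \<in> borel_measurable Q" "lr P1 P2 \<in> borel_measurable Q"
proof -
  have "RN_deriv P2 P1 \<in> borel_measurable Q"
    unfolding measurable_cong_sets[OF assms refl] by (rule borel_measurable_RN_deriv)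
  then show "llr P1 P2 \<in> borel_measurable Q" "lr P1 P2 \<in> borel_measurable Q"
    unfolding llr_def lr_def by measurable
qed

lemma comp_meas:
  assumes "sets Q = sets P2"
  shows "(\<lambda>y. llr P1 P2 (y i)) \<in> borel_measurable (PiM {..<n} (\<lambda>_. Q))"
proof (cases "i < n")
  case True
  show ?thesis
  proof (rule measurable_compose[where g="llr P1 P2"])
    show "(\<lambda>y. y i) \<in> measurable (PiM {..<n} (\<lambda>_. Q)) Q"
      using measurable_component_singleton[of i "{..<n}" "\<lambda>_. Q"] True by simp
    show "llr P1 P2 \<in> borel_measurable Q" by (rule llr_meas(1)[OF assms])
  qed
next
  case False
  have "\<And>y. y \<in> space (PiM {..<n} (\<lambda>_. Q)) \<Longrightarrow> llr P1 P2 (y i) = llr P1 P2 undefined"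
    using False by (auto simp: space_PiM PiE_def extensional_def)
  then show ?thesis by (subst measurable_cong[where g="\<lambda>_. llr P1 P2 undefined"]) auto
qed

lemma X_meas:
  assumes f: "\<And>i. (\<lambda>y. f y i) \<in> borel_measurable M"
  shows "(\<lambda>y. X E n \<rho> \<tau> (f y) k i) \<in> borel_measurable M \<and> (\<lambda>y. Al E n \<rho> \<tau> (f y) k i) \<in> borel_measurable M"
proof (induction k arbitrary: i)
  case 0 then show ?case by (simp add: X_def Al_def)
next
  case (Suc k)
  have [measurable]: "(\<lambda>y. X E n \<rho> \<tau> (f y) k j) \<in> borel_measurable M" for j using Suc by blast
  have [measurable]: "(\<lambda>y. Al E n \<rho> \<tau> (f y) k j) \<in> borel_measurable M" for j using Suc by blast
  have [measurable]: "(\<lambda>y. f y j) \<in> borel_measurable M" for j by (rule f)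
  have [measurable]: "(\<lambda>y. qq E n \<rho> \<tau> (f y) k j) \<in> borel_measurable M" for j
    unfolding qq_cases by measurable
  have X1[measurable]: "(\<lambda>y. X E n \<rho> \<tau> (f y) (Suc k) j) \<in> borel_measurable M" for j
    unfolding X_Suc by measurable
  have [measurable]: "(\<lambda>y. qq E n \<rho> \<tau> (f y) (Suc k) j) \<in> borel_measurable M" for j
    unfolding qq_cases by measurable
  have "(\<lambda>y. Al E n \<rho> \<tau> (f y) (Suc k) i) \<in> borel_measurable M"
    unfolding Al_Suc by measurable
  then show ?case using X1 by blast
qed

lemma conv_set_meas:
  assumes f: "\<And>i. (\<lambda>y. f y i) \<in> borel_measurable M"
  shows "{y \<in> space M. \<exists>k0. \<forall>k\<ge>k0. \<forall>i<n. X E n \<rho> \<tau> (f y) k i \<le> \<tau>} \<in> sets M"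
proof -
  have [measurable]: "(\<lambda>y. X E n \<rho> \<tau> (f y) k i) \<in> borel_measurable M" for k i
    using X_meas[where f=f and M=M, OF f] by blast
  show ?thesis by measurable
qed




lemma comp_meas_gen:
  assumes h: "h \<in> borel_measurable Q"
  shows "(\<lambda>y. h (y i)) \<in> borel_measurable (PiM {..<n} (\<lambda>_. Q))"
proof (cases "i < n")
  case True
  show ?thesis
  proof (rule measurable_compose[where g="h"])
    show "(\<lambda>y. y i) \<in> measurable (PiM {..<n} (\<lambda>_. Q)) Q"
      using measurable_component_singleton[of i "{..<n}" "\<lambda>_. Q"] True by simp
    show "h \<in> borel_measurable Q" by (rule h)
  qed
next
  case False
  have "\<And>y. y \<in> space (PiM {..<n} (\<lambda>_. Q)) \<Longrightarrow> h (y i) = h undefined"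
    using False by (auto simp: space_PiM PiE_def extensional_def)
  then show ?thesis by (subst measurable_cong[where g="\<lambda>_. h undefined"]) auto
qed

lemma main_Q:
  fixes P1 P2 Q :: "'a measure" and E :: "nat \<Rightarrow> nat \<Rightarrow> bool" and n :: nat and \<tau> :: real
  assumes pQ: "prob_space Q" and sQ: "sets Q = sets P2" and aeQ: "AE x in Q. lr P1 P2 x \<noteq> 0"
    and n2: "n \<ge> 2" and g: "simple_undirected_graph E n" and c: "graph_connected E n"
  shows "(\<forall>\<rho>. 0 < \<rho> \<and> \<rho> < real n / (4 * real (num_edges E n)) \<longrightarrow>
        1 - F_dist Q n P1 P2 (\<tau> + 4 * \<rho> * real (num_edges E n) / real n)
          \<le> measure (PiM {..<n} (\<lambda>_. Q)) (A_event E n P1 P2 \<tau> \<rho>)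
        \<and> measure (PiM {..<n} (\<lambda>_. Q)) (A_event E n P1 P2 \<tau> \<rho>)
          \<le> 1 - F_dist Q n P1 P2 (\<tau> - 12 * \<rho> * real n))
   \<and> measure (PiM {..<n} (\<lambda>_. Q)) (A_star n P1 P2 \<tau>) = 1 - F_dist Q n P1 P2 \<tau>
   \<and> (isCont (F_dist Q n P1 P2) \<tau> \<longrightarrow>
        ((\<lambda>\<rho>. measure (PiM {..<n} (\<lambda>_. Q)) (A_event E n P1 P2 \<tau> \<rho>))
           \<longlongrightarrow> measure (PiM {..<n} (\<lambda>_. Q)) (A_star n P1 P2 \<tau>)) (at_right 0))"
proof -
  define M where "M = PiM {..<n} (\<lambda>_. Q)"
  have n0: "n > 0" using n2 by simp
  interpret pM: prob_space M unfolding M_def by (rule prob_space_PiM) (use pQ in auto)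
  have spQ: "space Q = space P2" by (rule sets_eq_imp_space_eq[OF sQ])
  have spM: "space (PiM {..<n} (\<lambda>_. P2)) = space M" unfolding M_def by (simp add: space_PiM spQ)
  define L where "L y = (1 / real n) * ln (\<Prod>i<n. lr P1 P2 (y i))" for y :: "nat \<Rightarrow> 'a"
  define rr where "rr y = (\<lambda>i. llr P1 P2 (y i))" for y :: "nat \<Rightarrow> 'a"
  have [measurable]: "(\<lambda>y. lr P1 P2 (y i)) \<in> borel_measurable M" for i
    unfolding M_def by (rule comp_meas_gen[OF llr_meas(2)[OF sQ]])
  have rr_meas: "(\<lambda>y. rr y i) \<in> borel_measurable M" for i
    unfolding M_def rr_def by (rule comp_meas_gen[OF llr_meas(1)[OF sQ]])
  have Lmeas[measurable]: "L \<in> borel_measurable M" unfolding L_def by measurable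
  have F_eq: "F_dist Q n P1 P2 t = measure M {y\<in>space M. L y \<le> t}" for t
    unfolding F_dist_def M_def L_def by simp
  have gt_meas: "{y\<in>space M. L y > t} \<in> sets M" for t by measurable
  have compl: "measure M {y\<in>space M. L y > t} = 1 - F_dist Q n P1 P2 t" for t
  proof -
    have "{y\<in>space M. L y > t} = space M - {y\<in>space M. L y \<le> t}" by auto
    moreover have "{y\<in>space M. L y \<le> t} \<in> sets M" by measurable
    ultimately show ?thesis using pM.prob_compl F_eq by simp
  qed
  have Astar: "A_star n P1 P2 \<tau> = {y\<in>space M. L y > \<tau>}"
    unfolding A_star_def L_def spM by simp
  have Aeq: "A_event E n P1 P2 \<tau> \<rho> = space M - {y\<in>space M. \<exists>k0. \<forall>k\<ge>k0. \<forall>i<n. X E n \<rho> \<tau> (rr y) k i \<le> \<tau>}" for \<rho>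
    unfolding A_event_def spM A_iff[OF n0] rr_def by auto
  have Ameas: "A_event E n P1 P2 \<tau> \<rho> \<in> sets M" for \<rho>
    unfolding Aeq by (intro sets.Diff sets.top conv_set_meas rr_meas)
  have good: "AE y in M. \<forall>i\<in>{..<n}. lr P1 P2 (y i) \<noteq> 0"
    unfolding M_def by (intro AE_finite_allI AE_PiM_component) (auto simp: pQ aeQ)
  have Lsum: "L y = (1 / real n) * (\<Sum>i<n. rr y i)" if "\<forall>i\<in>{..<n}. lr P1 P2 (y i) \<noteq> 0" for y
    unfolding L_def rr_def llr_def using that by (subst ln_prod) auto
  have sumeq: "(\<Sum>i<n. rr y i - \<tau>) = (\<Sum>i<n. rr y i) - real n * \<tau>" for y
    by (simp add: sum_subtractf)
  define m where "m = real (num_edges E n)"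
  have Dm: "(\<Sum>i<n. dg E n i) \<le> 2 * m" unfolding m_def by (rule deg_sum[OF g])
  have mn: "m \<le> real n * real n" unfolding m_def using edges_le[of E n]
    by (metis of_nat_le_iff of_nat_mult)
  have mpos: "m > 0" unfolding m_def using edges_pos[OF g c n2] by simp
  have Dnn: "(\<Sum>i<n. dg E n i) \<ge> 0" by (intro sum_nonneg) (simp add: dg_def)
  have bounds: "1 - F_dist Q n P1 P2 (\<tau> + 4 * \<rho> * m / real n) \<le> measure M (A_event E n P1 P2 \<tau> \<rho>)
      \<and> measure M (A_event E n P1 P2 \<tau> \<rho>) \<le> 1 - F_dist Q n P1 P2 (\<tau> - 12 * \<rho> * real n)"
    if rho: "\<rho> > 0" for \<rho>
  proof
    have lo: "AE y in M. y \<in> {y\<in>space M. L y > \<tau> + 4 * \<rho> * m / real n} \<longrightarrow> y \<in> A_event E n P1 P2 \<tau> \<rho>"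
      using good
    proof eventually_elim
      case (elim y)
      show ?case
      proof
        assume y: "y \<in> {y\<in>space M. L y > \<tau> + 4 * \<rho> * m / real n}"
        have "real n * (\<tau> + 4 * \<rho> * m / real n) < real n * L y" using y n0 by simp
        moreover have "real n * L y = (\<Sum>i<n. rr y i)" using n0 Lsum[OF elim] by simp
        moreover have "real n * (\<tau> + 4 * \<rho> * m / real n) = real n * \<tau> + 4 * \<rho> * m"
          using n0 by (simp add: field_simps)
        ultimately have S: "real n * \<tau> + 4 * \<rho> * m < (\<Sum>i<n. rr y i)" by linarith
        have "\<not> (\<exists>k0. \<forall>k\<ge>k0. \<forall>i<n. X E n \<rho> \<tau> (rr y) k i \<le> \<tau>)"
        proof
          assume "\<exists>k0. \<forall>k\<ge>k0. \<forall>i<n. X E n \<rho> \<tau> (rr y) k i \<le> \<tau>"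
          then obtain k0 where "\<forall>k\<ge>k0. \<forall>i<n. X E n \<rho> \<tau> (rr y) k i \<le> \<tau>" by blast
          then have "\<forall>i<n. X E n \<rho> \<tau> (rr y) (Suc k0) i \<le> \<tau>" by simp
          from conv_low_bound[OF rho g this] have "(\<Sum>i<n. rr y i - \<tau>) \<le> 2 * \<rho> * (\<Sum>i<n. dg E n i)" .
          moreover have "2 * \<rho> * (\<Sum>i<n. dg E n i) \<le> 2 * \<rho> * (2 * m)"
            using Dm rho by (intro mult_left_mono) auto
          ultimately show False using S sumeq[of y] by linarith
        qed
        then show "y \<in> A_event E n P1 P2 \<tau> \<rho>" unfolding Aeq using y by auto
      qed
    qed
    have "1 - F_dist Q n P1 P2 (\<tau> + 4 * \<rho> * m / real n) = measure M {y\<in>space M. L y > \<tau> + 4 * \<rho> * m / real n}"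
      using compl by simp
    also have "\<dots> \<le> measure M (A_event E n P1 P2 \<tau> \<rho>)"
      by (rule pM.finite_measure_mono_AE[OF lo Ameas])
    finally show "1 - F_dist Q n P1 P2 (\<tau> + 4 * \<rho> * m / real n) \<le> measure M (A_event E n P1 P2 \<tau> \<rho>)" .
    have hi: "AE y in M. y \<in> A_event E n P1 P2 \<tau> \<rho> \<longrightarrow> y \<in> {y\<in>space M. L y > \<tau> - 12 * \<rho> * real n}"
      using good
    proof eventually_elim
      case (elim y)
      show ?case
      proof
        assume y: "y \<in> A_event E n P1 P2 \<tau> \<rho>"
        then have sp: "y \<in> space M" and nc: "\<not> (\<exists>k0. \<forall>k\<ge>k0. \<forall>i<n. X E n \<rho> \<tau> (rr y) k i \<le> \<tau>)"
          unfolding Aeq by auto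
        have "\<not> (\<Sum>i<n. rr y i - \<tau>) \<le> - 4 * \<rho> * (\<Sum>i<n. dg E n i)"
        proof
          assume "(\<Sum>i<n. rr y i - \<tau>) \<le> - 4 * \<rho> * (\<Sum>i<n. dg E n i)"
          from conv_high_bound[OF rho g c n0 this] nc show False
            by (auto simp: eventually_sequentially)
        qed
        then have "(\<Sum>i<n. rr y i - \<tau>) > - 4 * \<rho> * (\<Sum>i<n. dg E n i)" by simp
        moreover have "4 * \<rho> * (\<Sum>i<n. dg E n i) \<le> 4 * \<rho> * (2 * m)"
          using Dm rho by (intro mult_left_mono) auto
        moreover have "4 * \<rho> * (2 * m) \<le> 12 * \<rho> * (real n * real n)"
          using mn rho mpos by (simp add: mult_left_mono)
        ultimately have S: "(\<Sum>i<n. rr y i) > real n * \<tau> - 12 * \<rho> * (real n * real n)"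
          using sumeq[of y] by linarith
        have "L y = (\<Sum>i<n. rr y i) / real n" using Lsum[OF elim] by simp
        moreover have "(real n * \<tau> - 12 * \<rho> * (real n * real n)) / real n = \<tau> - 12 * \<rho> * real n"
          using n0 by (simp add: field_simps)
        ultimately have "L y > \<tau> - 12 * \<rho> * real n"
          using S n0 by (metis divide_strict_right_mono of_nat_0_less_iff)
        then show "y \<in> {y\<in>space M. L y > \<tau> - 12 * \<rho> * real n}" using sp by simp
      qed
    qed
    have "measure M (A_event E n P1 P2 \<tau> \<rho>) \<le> measure M {y\<in>space M. L y > \<tau> - 12 * \<rho> * real n}"
      by (rule pM.finite_measure_mono_AE[OF hi gt_meas])
    then show "measure M (A_event E n P1 P2 \<tau> \<rho>) \<le> 1 - F_dist Q n P1 P2 (\<tau> - 12 * \<rho> * real n)"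
      using compl by simp
  qed
  have star: "measure M (A_star n P1 P2 \<tau>) = 1 - F_dist Q n P1 P2 \<tau>"
    unfolding Astar by (rule compl)
  have lim: "((\<lambda>\<rho>. measure M (A_event E n P1 P2 \<tau> \<rho>)) \<longlongrightarrow> measure M (A_star n P1 P2 \<tau>)) (at_right 0)"
    if cont: "isCont (F_dist Q n P1 P2) \<tau>"
  proof -
    have l1: "((\<lambda>\<rho>::real. \<tau> + 4 * \<rho> * m / real n) \<longlongrightarrow> \<tau> + 4 * 0 * m / real n) (at_right 0)"
      using n0 by (intro tendsto_intros) auto
    have l2: "((\<lambda>\<rho>::real. \<tau> - 12 * \<rho> * real n) \<longlongrightarrow> \<tau> - 12 * 0 * real n) (at_right 0)"
      by (intro tendsto_intros)
    have f1: "((\<lambda>\<rho>. 1 - F_dist Q n P1 P2 (\<tau> + 4 * \<rho> * m / real n)) \<longlongrightarrow> 1 - F_dist Q n P1 P2 \<tau>) (at_right 0)"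
      using isCont_tendsto_compose[OF cont l1[simplified]] by (intro tendsto_intros)
    have f2: "((\<lambda>\<rho>. 1 - F_dist Q n P1 P2 (\<tau> - 12 * \<rho> * real n)) \<longlongrightarrow> 1 - F_dist Q n P1 P2 \<tau>) (at_right 0)"
      using isCont_tendsto_compose[OF cont l2[simplified]] by (intro tendsto_intros)
    have ev: "eventually (\<lambda>\<rho>::real. \<rho> > 0) (at_right 0)"
      by (simp add: eventually_at_right_field) (auto intro: exI[of _ 1])
    have e1: "eventually (\<lambda>\<rho>. 1 - F_dist Q n P1 P2 (\<tau> + 4 * \<rho> * m / real n) \<le> measure M (A_event E n P1 P2 \<tau> \<rho>)) (at_right 0)"
      using ev by eventually_elim (use bounds in blast)
    have e2: "eventually (\<lambda>\<rho>. measure M (A_event E n P1 P2 \<tau> \<rho>) \<le> 1 - F_dist Q n P1 P2 (\<tau> - 12 * \<rho> * real n)) (at_right 0)"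
      using ev by eventually_elim (use bounds in blast)
    show ?thesis unfolding star by (rule tendsto_sandwich[OF e1 e2 f1 f2])
  qed
  show ?thesis
    unfolding M_def[symmetric] m_def[symmetric] using bounds star lim by blast
qed



theorem mainTheorem6:
  fixes P1 P2 :: "'a measure" and E :: "nat \<Rightarrow> nat \<Rightarrow> bool" and n :: nat and \<tau> :: real
  assumes "prob_space P1" and "prob_space P2" and "sets P1 = sets P2"
    and "absolutely_continuous P1 P2" and "absolutely_continuous P2 P1"
    and "n \<ge> 2" and "simple_undirected_graph E n" and "graph_connected E n"
  shows "\<forall>Q \<in> {P1, P2}.
     (\<forall>\<rho>. 0 < \<rho> \<and> \<rho> < real n / (4 * real (num_edges E n)) \<longrightarrow>
        1 - F_dist Q n P1 P2 (\<tau> + 4 * \<rho> * real (num_edges E n) / real n)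
          \<le> measure (PiM {..<n} (\<lambda>_. Q)) (A_event E n P1 P2 \<tau> \<rho>)
        \<and> measure (PiM {..<n} (\<lambda>_. Q)) (A_event E n P1 P2 \<tau> \<rho>)
          \<le> 1 - F_dist Q n P1 P2 (\<tau> - 12 * \<rho> * real n))
   \<and> measure (PiM {..<n} (\<lambda>_. Q)) (A_star n P1 P2 \<tau>) = 1 - F_dist Q n P1 P2 \<tau>
   \<and> (isCont (F_dist Q n P1 P2) \<tau> \<longrightarrow>
        ((\<lambda>\<rho>. measure (PiM {..<n} (\<lambda>_. Q)) (A_event E n P1 P2 \<tau> \<rho>))
           \<longlongrightarrow> measure (PiM {..<n} (\<lambda>_. Q)) (A_star n P1 P2 \<tau>)) (at_right 0))"
  proof -
  have ae: "AE x in P2. lr P1 P2 x \<noteq> 0" "AE x in P1. lr P1 P2 x \<noteq> 0"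
    using AE_lr[OF assms(1-5)] by auto
  have "n \<ge> 2" "simple_undirected_graph E n" "graph_connected E n" using assms by auto
  note mq = main_Q[OF _ _ _ this]
  show ?thesis
    using mq[OF assms(1) assms(3) ae(2), of \<tau>] mq[OF assms(2) refl ae(1), of \<tau>] by blast
qed

end
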